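(* Let $0<x_{0}<x_{1}<\infty$, $g\in C^{1}[x_{0},x_{1}]$ with $g>0$ on $[x_{0},x_{1}]$, $w\in C[x_{0},x_{1}]$ with $w\ge0$ a.e., and $q\in L^{\infty}[x_{0},x_{1}]$ with $q\ge0$ a.e. On $H=L^{1}[x_{0},x_{1}]$ define $\mathcal{L}[p]=-(gp)'-wp$ with domain $\mathcal{D}(\mathcal{L})=\{\phi\in H:(g\phi)'\in H,\ (g\phi)(x_{0})=\int_{x_{0}}^{x_{1}}q(x)\phi(x)\,dx\}$. Define $$\xi(\lambda)=\int_{x_{0}}^{x_{1}}\frac{q(x)}{g(x)}\exp\left(-\int_{x_{0}}^{x}\frac{\lambda+w(s)}{g(s)}\,ds\right)dx-1,\qquad \lambda\in\mathbb{C}.$$ Then the spectrum of $\mathcal{L}$ equals its point spectrum, and for $\lambda\in\mathbb{C}$: $\lambda\in\sigma_{p}(\mathcal{L})=\sigma(\mathcal{L})$ if and only if $\xi(\lambda)=0$.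
   Context: $\sigma_p(\mathcal{L})$ denotes the set of eigenvalues of $\mathcal{L}$ (those $\lambda$ with $\mathcal{L}\phi=\lambda\phi$ for some nonzero $\phi\in\mathcal{D}(\mathcal{L})$). *)

theory Defs
  imports "HOL-Analysis.Analysis"
begin

text \<open>The Banach space H = L^1[x0,x1] of complex-valued functions, elements are
  represented by functions real => complex, identified up to equality a.e.
  with respect to Lebesgue measure on [x0,x1].\<close>

abbreviation Iv :: "real \<Rightarrow> real \<Rightarrow> real measure" where
  "Iv a b \<equiv> lebesgue_on {a..b}"

definition L1norm :: "real \<Rightarrow> real \<Rightarrow> (real \<Rightarrow> complex) \<Rightarrow> real" where
  "L1norm a b f = integral\<^sup>L (Iv a b) (\<lambda>x. cmod (f x))"

text \<open>Graph of the operator L[p] = -(g p)' - w p with domain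
  D(L) = { phi in H : (g phi)' in H, (g phi)(x0) = int q phi }.
  "(g phi)' in H" means: g phi agrees a.e. with an absolutely continuous function u,
  u(x) = u(x0) + int_{x0}^x h, whose derivative h is in L^1; (g phi)(x0) is u(x0).\<close>

definition L_graph ::
  "real \<Rightarrow> real \<Rightarrow> (real \<Rightarrow> real) \<Rightarrow> (real \<Rightarrow> real) \<Rightarrow> (real \<Rightarrow> real)
     \<Rightarrow> (real \<Rightarrow> complex) \<Rightarrow> (real \<Rightarrow> complex) \<Rightarrow> bool" where
  "L_graph x0 x1 g w q \<phi> \<psi> \<longleftrightarrow>
     integrable (Iv x0 x1) \<phi> \<and>
     (\<exists>u h. integrable (Iv x0 x1) h \<and>
        (\<forall>x\<in>{x0..x1}. u x = u x0 + integral\<^sup>L (Iv x0 x) h) \<and>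
        (AE x in Iv x0 x1. u x = of_real (g x) * \<phi> x) \<and>
        u x0 = integral\<^sup>L (Iv x0 x1) (\<lambda>x. of_real (q x) * \<phi> x) \<and>
        (AE x in Iv x0 x1. \<psi> x = - h x - of_real (w x) * \<phi> x))"

definition point_spectrum ::
  "real \<Rightarrow> real \<Rightarrow> (real \<Rightarrow> real) \<Rightarrow> (real \<Rightarrow> real) \<Rightarrow> (real \<Rightarrow> real) \<Rightarrow> complex set" where
  "point_spectrum x0 x1 g w q =
     {l. \<exists>\<phi>. L_graph x0 x1 g w q \<phi> (\<lambda>x. l * \<phi> x) \<and> \<not> (AE x in Iv x0 x1. \<phi> x = 0)}"

definition resolvent_set ::
  "real \<Rightarrow> real \<Rightarrow> (real \<Rightarrow> real) \<Rightarrow> (real \<Rightarrow> real) \<Rightarrow> (real \<Rightarrow> real) \<Rightarrow> complex set" where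
  "resolvent_set x0 x1 g w q =
     {l. (\<forall>f. integrable (Iv x0 x1) f \<longrightarrow>
            (\<exists>\<phi> \<psi>. L_graph x0 x1 g w q \<phi> \<psi> \<and>
                    (AE x in Iv x0 x1. l * \<phi> x - \<psi> x = f x))) \<and>
         (\<forall>\<phi> \<psi>. L_graph x0 x1 g w q \<phi> \<psi> \<and> (AE x in Iv x0 x1. l * \<phi> x - \<psi> x = 0)
                 \<longrightarrow> (AE x in Iv x0 x1. \<phi> x = 0)) \<and>
         (\<exists>C. \<forall>\<phi> \<psi>. L_graph x0 x1 g w q \<phi> \<psi> \<longrightarrow>
                 L1norm x0 x1 \<phi> \<le> C * L1norm x0 x1 (\<lambda>x. l * \<phi> x - \<psi> x))}"

definition spectrum_L ::
  "real \<Rightarrow> real \<Rightarrow> (real \<Rightarrow> real) \<Rightarrow> (real \<Rightarrow> real) \<Rightarrow> (real \<Rightarrow> real) \<Rightarrow> complex set" where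
  "spectrum_L x0 x1 g w q = - resolvent_set x0 x1 g w q"

definition xi ::
  "real \<Rightarrow> real \<Rightarrow> (real \<Rightarrow> real) \<Rightarrow> (real \<Rightarrow> real) \<Rightarrow> (real \<Rightarrow> real) \<Rightarrow> complex \<Rightarrow> complex" where
  "xi x0 x1 g w q l =
     integral\<^sup>L (Iv x0 x1)
       (\<lambda>x. of_real (q x / g x) *
            exp (- integral\<^sup>L (Iv x0 x) (\<lambda>s. (l + of_real (w s)) / of_real (g s)))) - 1"

end

theory Submission
  imports Defs
begin


lemma int_sub:
  fixes f :: "real \<Rightarrow> complex"
  assumes "integrable (Iv a b) f" "a \<le> c" "d \<le> b"
  shows "integrable (Iv c d) f"
proof -
  have "integrable lebesgue (\<lambda>x. if x \<in> {a..b} then f x else 0)"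
    using assms(1) Lebesgue_Measure.integrable_restrict_UNIV[of "{a..b}" f] by auto
  then have "integrable lebesgue (\<lambda>x. indicator {c..d} x *\<^sub>R (if x \<in> {a..b} then f x else 0))"
    by (intro integrable_mult_indicator) auto
  moreover have "(\<lambda>x. indicator {c..d} x *\<^sub>R (if x \<in> {a..b} then f x else 0)) = (\<lambda>x. if x \<in> {c..d} then f x else 0)"
    using assms by (auto simp: indicator_def)
  ultimately show ?thesis using Lebesgue_Measure.integrable_restrict_UNIV[of "{c..d}" f] by auto
qed

lemma LtoHK:
  fixes f :: "real \<Rightarrow> complex"
  assumes "integrable (Iv a b) f"
  shows "integral\<^sup>L (Iv a b) f = integral {a..b} f"
  using assms by (intro lebesgue_integral_eq_integral) auto

lemma FTC_deriv:
  fixes c :: "real \<Rightarrow> complex"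
  assumes "continuous_on {a..b} c" "x \<in> {a..b}"
  shows "((\<lambda>y. integral\<^sup>L (Iv a y) c) has_vector_derivative c x) (at x within {a..b})"
proof (rule has_vector_derivative_transform[OF assms(2)])
  show "((\<lambda>u. integral {a..u} c) has_vector_derivative c x) (at x within {a..b})"
    by (rule integral_has_vector_derivative[OF assms])
  fix y assume y: "y \<in> {a..b}"
  have "continuous_on {a..y} c" using assms(1) y by (auto intro: continuous_on_subset)
  then show "integral\<^sup>L (Iv a y) c = integral {a..y} c"
    by (intro LtoHK continuous_imp_integrable_real)
qed

lemma FTC:
  fixes F F' :: "real \<Rightarrow> complex"
  assumes "\<And>y. y \<in> {a..b} \<Longrightarrow> (F has_vector_derivative F' y) (at y within {a..b})"
    and "continuous_on {a..b} F'" "a \<le> b"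
  shows "integral\<^sup>L (Iv a b) F' = F b - F a"
proof -
  have "(F' has_integral (F b - F a)) {a..b}"
    using fundamental_theorem_of_calculus[OF assms(3,1)] by auto
  then show ?thesis using LtoHK[OF continuous_imp_integrable_real[OF assms(2)]]
    by (simp add: integral_unique)
qed

lemma indef_cont:
  fixes h :: "real \<Rightarrow> complex"
  assumes "integrable (Iv a b) h"
  shows "continuous_on {a..b} (\<lambda>x. integral\<^sup>L (Iv a x) h)"
proof -
  have "continuous_on {a..b} (\<lambda>x. integral {a..x} h)"
    by (rule indefinite_integral_continuous_1) (use assms integrable_on_lebesgue_on in force)
  moreover have "\<And>x. x \<in> {a..b} \<Longrightarrow> integral\<^sup>L (Iv a x) h = integral {a..x} h"
    using assms int_sub LtoHK by (metis atLeastAtMost_iff order_refl)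
  ultimately show ?thesis using continuous_on_cong by (metis (no_types, lifting))
qed

lemma int_point: "integral\<^sup>L (Iv a a) (f::real\<Rightarrow>complex) = 0"
  by (intro integral_eq_zero_null_sets) auto

lemma int_point': "integral\<^sup>L (lebesgue_on {a}) (f::real\<Rightarrow>complex) = 0"
  using int_point[of a f] by simp

lemma ODE_unique:
  fixes a u :: "real \<Rightarrow> complex"
  assumes a: "continuous_on {x0..x1} a" and u: "continuous_on {x0..x1} u"
  and eq: "\<forall>x\<in>{x0..x1}. u x = u x0 - integral\<^sup>L (Iv x0 x) (\<lambda>s. a s * u s)"
  and x: "x \<in> {x0..x1}"
  shows "u x = u x0 * exp (- integral\<^sup>L (Iv x0 x) a)"
proof -
  define A where "A = (\<lambda>y. integral\<^sup>L (Iv x0 y) a)"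
  define D where "D = (\<lambda>y. u y * exp (A y))"
  have au: "continuous_on {x0..x1} (\<lambda>s. a s * u s)" using a u by (intro continuous_intros)
  have "(D has_vector_derivative 0) (at y within {x0..x1})" if y: "y \<in> {x0..x1}" for y
  proof -
    have d1: "(u has_vector_derivative - (a y * u y)) (at y within {x0..x1})"
    proof (rule has_vector_derivative_transform[OF y])
      show "((\<lambda>y. u x0 - integral\<^sup>L (Iv x0 y) (\<lambda>s. a s * u s)) has_vector_derivative - (a y * u y)) (at y within {x0..x1})"
        using has_vector_derivative_diff[OF has_vector_derivative_const FTC_deriv[OF au y]] by simp
    qed (use eq in blast)
    have dA: "(A has_vector_derivative a y) (at y within {x0..x1})"
      unfolding A_def by (rule FTC_deriv[OF a y])
    have d2: "((exp \<circ> A) has_vector_derivative (a y * exp (A y))) (at y within {x0..x1})"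
      by (rule field_vector_diff_chain_within[OF dA]) (rule has_field_derivative_at_within[OF DERIV_exp])
    have "((\<lambda>y. u y * (exp \<circ> A) y) has_vector_derivative (u y * (a y * exp (A y)) + (- (a y * u y)) * (exp \<circ> A) y)) (at y within {x0..x1})"
      by (rule has_vector_derivative_mult[OF d1 d2])
    then show ?thesis unfolding D_def by (simp add: algebra_simps)
  qed
  then obtain c where c: "\<And>y. y \<in> {x0..x1} \<Longrightarrow> D y = c"
    using has_vector_derivative_zero_constant[of "{x0..x1}" D] by blast
  have "x0 \<in> {x0..x1}" using x by auto
  then have "c = u x0" using c[of x0] by (simp add: D_def A_def int_point')
  then have "D x = u x0" using c x by auto
  then show ?thesis unfolding D_def A_def by (simp add: exp_minus field_simps)
qed

lemma cont_bound:
  fixes f :: "real \<Rightarrow> complex"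
  assumes "continuous_on {a..b} f"
  shows "\<exists>M. \<forall>x\<in>{a..b}. norm (f x) \<le> M"
proof -
  have "bounded (f ` {a..b})" using assms by (intro compact_imp_bounded compact_continuous_image) auto
  then show ?thesis by (auto simp: bounded_iff)
qed

lemma fubini_tri:
  fixes k G :: "real \<Rightarrow> complex"
  assumes k: "integrable (Iv a b) k" and G: "continuous_on {a..b} G"
  shows "integral\<^sup>L (Iv a b) (\<lambda>t. G t * integral\<^sup>L (Iv a t) k)
       = integral\<^sup>L (Iv a b) (\<lambda>s. k s * integral\<^sup>L (Iv s b) G)"
proof -
  define M where "M = Iv a b"
  have fin: "finite_measure M" unfolding M_def by (rule finite_measure_lebesgue_on) auto
  interpret F: finite_measure M by (rule fin)
  interpret P: pair_sigma_finite M M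
    using fin by (simp add: pair_sigma_finite_def finite_measure_def)
  define H where "H = (\<lambda>s t. if s \<le> t then k s * G t else 0)"
  have km[measurable]: "k \<in> borel_measurable M" using k unfolding M_def by auto
  have Gi: "integrable M G" unfolding M_def by (rule continuous_imp_integrable_real[OF G])
  have Gm[measurable]: "G \<in> borel_measurable M" using Gi by auto
  have idm: "(\<lambda>x. x) \<in> borel_measurable M" unfolding M_def using id_borel_measurable_lebesgue_on by (simp add: id_def)
  have fm[measurable]: "(\<lambda>p. fst p :: real) \<in> borel_measurable (M \<Otimes>\<^sub>M M)"
    by (rule measurable_compose[OF measurable_fst idm])
  have sm[measurable]: "(\<lambda>p. snd p :: real) \<in> borel_measurable (M \<Otimes>\<^sub>M M)"
    by (rule measurable_compose[OF measurable_snd idm])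
  have Hm: "(\<lambda>p. H (fst p) (snd p)) \<in> borel_measurable (M \<Otimes>\<^sub>M M)"
    unfolding H_def by measurable
  obtain MG where MG: "\<forall>x\<in>{a..b}. norm (G x) \<le> MG" using cont_bound[OF G] by blast
  define B where "B = (\<lambda>p::real\<times>real. norm (k (fst p)) * MG)"
  have Bi: "integrable (M \<Otimes>\<^sub>M M) B"
  proof (rule P.Fubini_integrable)
    show "B \<in> borel_measurable (M \<Otimes>\<^sub>M M)" unfolding B_def by measurable
    show "integrable M (\<lambda>x. LINT y|M. norm (B (x, y)))"
      unfolding B_def using k unfolding M_def by simp
    show "AE x in M. integrable M (\<lambda>y. B (x, y))" unfolding B_def by simp
  qed
  have Hi: "integrable (M \<Otimes>\<^sub>M M) (case_prod H)"
  proof (rule Bochner_Integration.integrable_bound[OF Bi])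
    show "case_prod H \<in> borel_measurable (M \<Otimes>\<^sub>M M)" using Hm by (simp add: case_prod_beta')
    show "AE x in M \<Otimes>\<^sub>M M. norm (case_prod H x) \<le> norm (B x)"
    proof (rule AE_I2)
      fix p assume "p \<in> space (M \<Otimes>\<^sub>M M)"
      then have "snd p \<in> {a..b}" by (auto simp: space_pair_measure M_def)
      then have "norm (G (snd p)) \<le> MG" using MG by auto
      then have MG0: "0 \<le> MG" "norm (G (snd p)) \<le> MG" by (auto intro: order.trans[OF norm_ge_zero])
      obtain s t where p: "p = (s, t)" by (cases p)
      have "norm (case_prod H p) \<le> norm (k s) * MG"
        using MG0 by (auto simp: p H_def norm_mult intro: mult_left_mono)
      then show "norm (case_prod H p) \<le> norm (B p)" unfolding B_def p by simp
    qed
  qed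
  have L: "(\<lambda>t. G t * integral\<^sup>L (Iv a t) k) x = (\<integral>s. H s x \<partial>M)" if x: "x \<in> {a..b}" for x
  proof -
    have "integral\<^sup>L (Iv a x) k = integral\<^sup>L M (\<lambda>s. if s \<in> {a..x} then k s else 0)"
      unfolding M_def using x by (intro integral_restrict[symmetric]) auto
    also have "\<dots> = integral\<^sup>L M (\<lambda>s. if s \<le> x then k s else 0)"
      by (intro Bochner_Integration.integral_cong) (auto simp: M_def)
    finally show ?thesis unfolding H_def
      by (simp add: integral_mult_right_zero[symmetric] if_distrib mult.commute cong: if_cong)
  qed
  have R: "(\<lambda>s. k s * integral\<^sup>L (Iv s b) G) x = (\<integral>t. H x t \<partial>M)" if x: "x \<in> {a..b}" for x
  proof -
    have "integral\<^sup>L (Iv x b) G = integral\<^sup>L M (\<lambda>t. if t \<in> {x..b} then G t else 0)"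
      unfolding M_def using x by (intro integral_restrict[symmetric]) auto
    also have "\<dots> = integral\<^sup>L M (\<lambda>t. if x \<le> t then G t else 0)"
      by (intro Bochner_Integration.integral_cong) (auto simp: M_def)
    finally have e: "integral\<^sup>L (Iv x b) G = integral\<^sup>L M (\<lambda>t. if x \<le> t then G t else 0)" .
    have "(\<lambda>t. H x t) = (\<lambda>t. k x * (if x \<le> t then G t else 0))" by (auto simp: H_def)
    then show ?thesis using e by simp
  qed
  have "integral\<^sup>L M (\<lambda>t. G t * integral\<^sup>L (Iv a t) k) = (\<integral>t. (\<integral>s. H s t \<partial>M) \<partial>M)"
    using L by (intro Bochner_Integration.integral_cong) (auto simp: M_def)
  also have "\<dots> = (\<integral>s. (\<integral>t. H s t \<partial>M) \<partial>M)"
    by (rule P.Fubini_integral[OF Hi])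
  also have "\<dots> = integral\<^sup>L M (\<lambda>s. k s * integral\<^sup>L (Iv s b) G)"
    using R by (intro Bochner_Integration.integral_cong) (auto simp: M_def)
  finally show ?thesis unfolding M_def .
qed

lemma cont_meas:
  fixes g :: "real \<Rightarrow> 'b::euclidean_space"
  assumes "continuous_on {a..b} g"
  shows "g \<in> borel_measurable (Iv a b)"
  using continuous_imp_integrable_real[OF assms] by auto

lemma int_mult_cont:
  fixes f g :: "real \<Rightarrow> complex"
  assumes f: "integrable (Iv a b) f" and g: "continuous_on {a..b} g"
  shows "integrable (Iv a b) (\<lambda>s. f s * g s)"
proof -
  obtain Mg where Mg: "\<forall>x\<in>{a..b}. norm (g x) \<le> Mg" using cont_bound[OF g] by blast
  show ?thesis
  proof (rule Bochner_Integration.integrable_bound)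
    show "integrable (Iv a b) (\<lambda>s. norm (f s) * Mg)" using f by simp
    show "(\<lambda>s. f s * g s) \<in> borel_measurable (Iv a b)"
      using f cont_meas[OF g] by (intro borel_measurable_times) auto
    show "AE x in Iv a b. norm (f x * g x) \<le> norm (norm (f x) * Mg)"
    proof (rule AE_I2)
      fix x assume "x \<in> space (Iv a b)"
      then have x: "norm (g x) \<le> Mg" using Mg by auto
      then have "0 \<le> Mg" by (meson norm_ge_zero order.trans)
      then show "norm (f x * g x) \<le> norm (norm (f x) * Mg)"
        using x by (simp add: norm_mult mult_left_mono)
    qed
  qed
qed

lemma exist_sol:
  fixes a f :: "real \<Rightarrow> complex" and c :: complex
  assumes a: "continuous_on {x0..x1} a" and f: "integrable (Iv x0 x1) f"
    and x: "x \<in> {x0..x1}"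
  defines "A \<equiv> \<lambda>x. integral\<^sup>L (Iv x0 x) a"
  defines "K \<equiv> \<lambda>x. integral\<^sup>L (Iv x0 x) (\<lambda>s. f s * exp (A s))"
  defines "U \<equiv> \<lambda>x. exp (- A x) * (c + K x)"
  shows "U x = U x0 + integral\<^sup>L (Iv x0 x) (\<lambda>s. f s - a s * U s)"
proof -
  define I where "I = {x0..x1}"
  define J where "J = {x0..x}"
  have JI: "J \<subseteq> I" using x by (auto simp: I_def J_def)
  have A0: "A x0 = 0" by (simp add: A_def int_point')
  have K0: "K x0 = 0" by (simp add: K_def int_point')
  have U0: "U x0 = c" by (simp add: U_def A0 K0)
  have Ader: "(A has_vector_derivative a y) (at y within I)" if "y \<in> I" for y
    unfolding A_def I_def by (rule FTC_deriv[OF a]) (use that I_def in auto)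
  have Acont: "continuous_on I A"
    unfolding A_def I_def by (rule indef_cont[OF continuous_imp_integrable_real[OF a]])
  define E where "E = (\<lambda>y. exp (- A y))"
  have Econt: "continuous_on I E" unfolding E_def using Acont by (intro continuous_intros)
  have Eder: "(E has_vector_derivative - (a y * E y)) (at y within I)" if "y \<in> I" for y
  proof -
    have "((\<lambda>y. - A y) has_vector_derivative - a y) (at y within I)"
      using has_vector_derivative_minus[OF Ader[OF that]] .
    from field_vector_diff_chain_within[OF this has_field_derivative_at_within[OF DERIV_exp]]
    show ?thesis by (simp add: E_def o_def)
  qed
  define G where "G = (\<lambda>t. a t * E t)"
  have Gcont: "continuous_on I G" unfolding G_def using a Econt I_def by (intro continuous_intros) auto
  have FTCG: "integral\<^sup>L (Iv s x) G = E s - E x" if s: "s \<in> J" for s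
  proof -
    have sub: "{s..x} \<subseteq> I" using s JI J_def by auto
    have "integral\<^sup>L (Iv s x) (\<lambda>t. - G t) = E x - E s"
    proof (rule FTC)
      fix y assume y: "y \<in> {s..x}"
      then have "y \<in> I" using sub by auto
      then show "(E has_vector_derivative - G y) (at y within {s..x})"
        using has_vector_derivative_within_subset[OF Eder[of y] sub] by (simp add: G_def)
    next
      show "continuous_on {s..x} (\<lambda>t. - G t)" using Gcont sub by (intro continuous_intros) (auto intro: continuous_on_subset)
    qed (use s J_def in auto)
    then have h: "- integral\<^sup>L (Iv s x) G = E x - E s" by simp
    have "integral\<^sup>L (Iv s x) G = - (- integral\<^sup>L (Iv s x) G)" by simp
    also have "\<dots> = E s - E x" unfolding h by simp
    finally show ?thesis .
  qed
  define k where "k = (\<lambda>s. f s * exp (A s))"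
  have ec: "continuous_on {x0..x1} (\<lambda>s. exp (A s))"
    using Acont unfolding I_def by (rule continuous_on_exp)
  have ki: "integrable (Iv x0 x1) k" unfolding k_def by (rule int_mult_cont[OF f ec])
  have kJ: "integrable (Iv x0 x) k" using int_sub[OF ki] x by auto
  have fJ: "integrable (Iv x0 x) f" using int_sub[OF f] x by auto
  have Kcont: "continuous_on I K" unfolding K_def I_def using indef_cont[OF ki] by (simp add: k_def)
  have GJ: "continuous_on J G" using Gcont JI by (rule continuous_on_subset)
  have EJ: "continuous_on J E" using Econt JI by (rule continuous_on_subset)
  have KJ: "continuous_on J K" using Kcont JI by (rule continuous_on_subset)
  have Ueq: "U = (\<lambda>t. c * E t + E t * K t)" by (auto simp: U_def E_def algebra_simps)
  have aU: "(\<lambda>s. a s * U s) = (\<lambda>s. c * G s + G s * K s)" by (auto simp: Ueq G_def algebra_simps)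
  have i1: "integrable (Iv x0 x) G" using GJ J_def continuous_imp_integrable_real by auto
  have i2: "integrable (Iv x0 x) (\<lambda>s. G s * K s)" using GJ KJ J_def
    by (intro continuous_imp_integrable_real continuous_intros) auto
  have "integral\<^sup>L (Iv x0 x) (\<lambda>s. G s * K s) = integral\<^sup>L (Iv x0 x) (\<lambda>s. k s * integral\<^sup>L (Iv s x) G)"
    unfolding K_def k_def[symmetric] by (rule fubini_tri[OF kJ]) (use GJ J_def in auto)
  also have "\<dots> = integral\<^sup>L (Iv x0 x) (\<lambda>s. f s - k s * E x)"
  proof (rule Bochner_Integration.integral_cong[OF refl])
    fix s assume "s \<in> space (Iv x0 x)"
    then have "s \<in> J" by (simp add: J_def)
    then show "k s * integral\<^sup>L (Iv s x) G = f s - k s * E x"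
      by (simp add: FTCG k_def E_def algebra_simps exp_minus_inverse)
  qed
  also have "\<dots> = integral\<^sup>L (Iv x0 x) f - K x * E x"
    using fJ kJ by (simp add: K_def k_def)
  finally have fub: "integral\<^sup>L (Iv x0 x) (\<lambda>s. G s * K s) = integral\<^sup>L (Iv x0 x) f - K x * E x" .
  have GE: "integral\<^sup>L (Iv x0 x) G = 1 - E x"
    using FTCG[of x0] x by (simp add: J_def E_def A0)
  have "integral\<^sup>L (Iv x0 x) (\<lambda>s. f s - a s * U s) = integral\<^sup>L (Iv x0 x) f - integral\<^sup>L (Iv x0 x) (\<lambda>s. a s * U s)"
    using fJ i1 i2 by (simp add: aU)
  also have "\<dots> = integral\<^sup>L (Iv x0 x) f - (c * (1 - E x) + (integral\<^sup>L (Iv x0 x) f - K x * E x))"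
    using i1 i2 by (simp add: aU GE fub)
  also have "\<dots> = U x - U x0" by (simp add: Ueq E_def A0 K0 algebra_simps)
  finally show ?thesis by simp
qed

lemma AE_sub:
  assumes "AE x in Iv a b. P x" "a \<le> c" "d \<le> b"
  shows "AE x in Iv c d. P x"
  using assms by (auto simp: AE_restrict_space_iff elim!: eventually_mono)

lemma ae_meas_leb:
  fixes f g :: "real \<Rightarrow> complex"
  assumes g: "g \<in> borel_measurable lebesgue" and ae: "AE x in lebesgue. f x = g x"
  shows "f \<in> borel_measurable lebesgue"
proof (rule measurableI)
  fix Y :: "complex set" assume Y: "Y \<in> sets borel"
  have "g -` Y \<inter> space lebesgue \<in> sets lebesgue" using measurable_sets[OF g Y] .
  then show "f -` Y \<inter> space lebesgue \<in> sets lebesgue"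
  proof (rule completion.in_sets_AE[rotated])
    show "AE x in lebesgue. (x \<in> g -` Y \<inter> space lebesgue) = (x \<in> f -` Y \<inter> space lebesgue)"
      using ae by (auto elim!: eventually_mono)
  qed auto
qed auto

lemma ae_meas:
  fixes f g :: "real \<Rightarrow> complex"
  assumes g: "g \<in> borel_measurable (Iv a b)" and ae: "AE x in Iv a b. f x = g x"
  shows "f \<in> borel_measurable (Iv a b)"
proof -
  have S: "{a..b} \<in> sets lebesgue" by simp
  have "(\<lambda>x. if x \<in> {a..b} then g x else 0) \<in> borel_measurable lebesgue"
    using g borel_measurable_if[OF S] by blast
  moreover have "AE x in lebesgue. (\<lambda>x. if x \<in> {a..b} then f x else 0) x = (\<lambda>x. if x \<in> {a..b} then g x else 0) x"
    using ae by (auto simp: AE_restrict_space_iff elim!: eventually_mono)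
  ultimately have "(\<lambda>x. if x \<in> {a..b} then f x else 0) \<in> borel_measurable lebesgue"
    by (rule ae_meas_leb)
  then show ?thesis using borel_measurable_if[OF S] by blast
qed



locale S =
  fixes x0 x1 :: real and g w q :: "real \<Rightarrow> real"
  assumes lt: "x0 < x1"
  and gc: "continuous_on {x0..x1} g"
  and gpos: "\<forall>x\<in>{x0..x1}. g x > 0"
  and wc: "continuous_on {x0..x1} w"
  and qm: "q \<in> borel_measurable (Iv x0 x1)"
  and qi: "integrable (Iv x0 x1) (\<lambda>x. complex_of_real (q x))"
begin

definition a where "a l s = (l + complex_of_real (w s)) / complex_of_real (g s)"
definition A where "A l x = integral\<^sup>L (Iv x0 x) (a l)"
definition E where "E l x = exp (- A l x)"
definition K where "K l fr x = integral\<^sup>L (Iv x0 x) (\<lambda>s. fr s * exp (A l s))"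

lemma gnz: assumes "x \<in> {x0..x1}" shows "complex_of_real (g x) \<noteq> 0"
proof -
  have "g x > 0" using gpos assms by blast
  then show ?thesis by simp
qed

lemma gcc: "continuous_on {x0..x1} (\<lambda>x. complex_of_real (g x))"
  using gc by (intro continuous_intros)

lemma wcc: "continuous_on {x0..x1} (\<lambda>x. complex_of_real (w x))"
  using wc by (intro continuous_intros)

lemma acont: "continuous_on {x0..x1} (a l)"
  unfolding a_def using gcc wcc gnz by (intro continuous_intros) auto

lemma Acont: "continuous_on {x0..x1} (A l)"
  unfolding A_def by (rule indef_cont[OF continuous_imp_integrable_real[OF acont]])

lemma Econt: "continuous_on {x0..x1} (E l)"
  unfolding E_def using Acont by (intro continuous_intros)

lemma A0: "A l x0 = 0" by (simp add: A_def int_point')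
lemma E0: "E l x0 = 1" by (simp add: E_def A0)
lemma K0: "K l fr x0 = 0" by (simp add: K_def int_point')

lemma Kcont:
  assumes "integrable (Iv x0 x1) fr"
  shows "continuous_on {x0..x1} (K l fr)"
proof -
  have "continuous_on {x0..x1} (\<lambda>s. exp (A l s))" using Acont by (intro continuous_intros)
  then have "integrable (Iv x0 x1) (\<lambda>s. fr s * exp (A l s))" by (rule int_mult_cont[OF assms])
  then show ?thesis unfolding K_def by (rule indef_cont)
qed

lemma qg_int:
  assumes "continuous_on {x0..x1} c"
  shows "integrable (Iv x0 x1) (\<lambda>x. complex_of_real (q x / g x) * c x)"
proof -
  have "continuous_on {x0..x1} (\<lambda>x. c x / complex_of_real (g x))"
    using assms gcc gnz by (intro continuous_intros) auto
  then have "integrable (Iv x0 x1) (\<lambda>x. complex_of_real (q x) * (c x / complex_of_real (g x)))"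
    by (rule int_mult_cont[OF qi])
  then show ?thesis by (simp add: field_simps)
qed

lemma sol_form:
  assumes fr: "integrable (Iv x0 x1) fr" and uc: "continuous_on {x0..x1} u"
    and ueq: "\<forall>x\<in>{x0..x1}. u x = u x0 + integral\<^sup>L (Iv x0 x) (\<lambda>s. fr s - a l s * u s)"
    and x: "x \<in> {x0..x1}"
  shows "u x = E l x * (u x0 + K l fr x)"
proof -
  define V where "V = (\<lambda>x. E l x * (u x0 + K l fr x))"
  have Veq: "V y = V x0 + integral\<^sup>L (Iv x0 y) (\<lambda>s. fr s - a l s * V s)" if y: "y \<in> {x0..x1}" for y
    using exist_sol[OF acont fr y, where c="u x0"] unfolding V_def E_def A_def K_def by simp
  have V0: "V x0 = u x0" by (simp add: V_def E0 K0)
  have Vc: "continuous_on {x0..x1} V" unfolding V_def using Econt Kcont[OF fr]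
    by (intro continuous_intros) auto
  define d where "d = (\<lambda>y. u y - V y)"
  have dc: "continuous_on {x0..x1} d" unfolding d_def using uc Vc by (intro continuous_intros)
  have deq: "\<forall>y\<in>{x0..x1}. d y = d x0 - integral\<^sup>L (Iv x0 y) (\<lambda>s. a l s * d s)"
  proof
    fix y assume y: "y \<in> {x0..x1}"
    have sub: "{x0..y} \<subseteq> {x0..x1}" using y by auto
    have fy: "integrable (Iv x0 y) fr" using int_sub[OF fr] y by auto
    have au: "integrable (Iv x0 y) (\<lambda>s. a l s * u s)"
      by (rule continuous_imp_integrable_real[OF continuous_on_subset[OF continuous_on_mult[OF acont[of l] uc] sub]])
    have aV: "integrable (Iv x0 y) (\<lambda>s. a l s * V s)"
      by (rule continuous_imp_integrable_real[OF continuous_on_subset[OF continuous_on_mult[OF acont[of l] Vc] sub]])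
    have "integral\<^sup>L (Iv x0 y) (\<lambda>s. a l s * d s) = integral\<^sup>L (Iv x0 y) (\<lambda>s. a l s * u s - a l s * V s)"
      by (simp add: d_def algebra_simps)
    also have "\<dots> = integral\<^sup>L (Iv x0 y) (\<lambda>s. a l s * u s) - integral\<^sup>L (Iv x0 y) (\<lambda>s. a l s * V s)"
      using au aV by simp
    finally have e1: "integral\<^sup>L (Iv x0 y) (\<lambda>s. a l s * d s) = integral\<^sup>L (Iv x0 y) (\<lambda>s. a l s * u s) - integral\<^sup>L (Iv x0 y) (\<lambda>s. a l s * V s)" .
    have e2: "integral\<^sup>L (Iv x0 y) (\<lambda>s. fr s - a l s * u s) = integral\<^sup>L (Iv x0 y) fr - integral\<^sup>L (Iv x0 y) (\<lambda>s. a l s * u s)"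
      using fy au by simp
    have e3: "integral\<^sup>L (Iv x0 y) (\<lambda>s. fr s - a l s * V s) = integral\<^sup>L (Iv x0 y) fr - integral\<^sup>L (Iv x0 y) (\<lambda>s. a l s * V s)"
      using fy aV by simp
    show "d y = d x0 - integral\<^sup>L (Iv x0 y) (\<lambda>s. a l s * d s)"
      using ueq[rule_format, OF y] Veq[OF y] unfolding e1 unfolding d_def
      by (simp only: e2 e3) (simp add: algebra_simps)
  qed
  have "d x = d x0 * exp (- integral\<^sup>L (Iv x0 x) (a l))"
    by (rule ODE_unique[OF acont dc deq x])
  then have "d x = 0" by (simp add: d_def V0)
  then show ?thesis by (simp add: d_def V_def)
qed

lemma graph_sol:
  assumes G: "L_graph x0 x1 g w q \<phi> \<psi>"
  obtains u fr where "integrable (Iv x0 x1) fr" "AE x in Iv x0 x1. l * \<phi> x - \<psi> x = fr x"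
   "continuous_on {x0..x1} u"
   "\<forall>x\<in>{x0..x1}. u x = u x0 + integral\<^sup>L (Iv x0 x) (\<lambda>s. fr s - a l s * u s)"
   "AE x in Iv x0 x1. \<phi> x = u x / complex_of_real (g x)"
   "u x0 = integral\<^sup>L (Iv x0 x1) (\<lambda>x. complex_of_real (q x / g x) * u x)"
   "integrable (Iv x0 x1) \<phi>"
proof -
  from G obtain u h where \<phi>i: "integrable (Iv x0 x1) \<phi>" and hi: "integrable (Iv x0 x1) h"
    and ueq: "\<forall>x\<in>{x0..x1}. u x = u x0 + integral\<^sup>L (Iv x0 x) h"
    and aeu: "AE x in Iv x0 x1. u x = complex_of_real (g x) * \<phi> x"
    and u0: "u x0 = integral\<^sup>L (Iv x0 x1) (\<lambda>x. complex_of_real (q x) * \<phi> x)"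
    and ae\<psi>: "AE x in Iv x0 x1. \<psi> x = - h x - complex_of_real (w x) * \<phi> x"
    unfolding L_graph_def by blast
  define fr where "fr = (\<lambda>x. l * \<phi> x + h x + \<phi> x * complex_of_real (w x))"
  have i1: "integrable (Iv x0 x1) (\<lambda>x. l * \<phi> x)" using \<phi>i by simp
  have i2: "integrable (Iv x0 x1) (\<lambda>x. \<phi> x * complex_of_real (w x))" by (rule int_mult_cont[OF \<phi>i wcc])
  have fri: "integrable (Iv x0 x1) fr" unfolding fr_def
    by (intro Bochner_Integration.integrable_add i1 i2 hi)
  have ae1: "AE x in Iv x0 x1. l * \<phi> x - \<psi> x = fr x"
  proof (rule eventually_mono[OF ae\<psi>])
    fix x assume "\<psi> x = - h x - complex_of_real (w x) * \<phi> x"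
    then show "l * \<phi> x - \<psi> x = fr x" by (simp add: fr_def)
  qed
  have c1: "continuous_on {x0..x1} (\<lambda>x. u x0 + integral\<^sup>L (Iv x0 x) h)"
    using indef_cont[OF hi] by (intro continuous_intros)
  have uc: "continuous_on {x0..x1} u"
    using c1 ueq by (metis (no_types, lifting) continuous_on_cong)
  have aeh: "AE x in Iv x0 x1. h x = fr x - a l x * u x"
  proof (rule lebesgue_on_mono[OF aeu])
    fix x assume ux: "u x = complex_of_real (g x) * \<phi> x" and x: "x \<in> {x0..x1}"
    have "a l x * u x = (l + complex_of_real (w x)) * \<phi> x"
      using gnz[OF x] unfolding a_def ux by (simp add: field_simps)
    then show "h x = fr x - a l x * u x" by (simp add: fr_def algebra_simps)
  qed
  have ueq': "\<forall>x\<in>{x0..x1}. u x = u x0 + integral\<^sup>L (Iv x0 x) (\<lambda>s. fr s - a l s * u s)"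
  proof
    fix x assume x: "x \<in> {x0..x1}"
    have sub: "{x0..x} \<subseteq> {x0..x1}" using x by auto
    have "integral\<^sup>L (Iv x0 x) h = integral\<^sup>L (Iv x0 x) (\<lambda>s. fr s - a l s * u s)"
    proof (rule integral_cong_AE)
      show "h \<in> borel_measurable (Iv x0 x)" using int_sub[OF hi, of x0 x] x by auto
      have "fr \<in> borel_measurable (Iv x0 x)" using int_sub[OF fri, of x0 x] x by auto
      moreover have "(\<lambda>s. a l s * u s) \<in> borel_measurable (Iv x0 x)"
        by (rule cont_meas[OF continuous_on_subset[OF continuous_on_mult[OF acont[of l] uc] sub]])
      ultimately show "(\<lambda>s. fr s - a l s * u s) \<in> borel_measurable (Iv x0 x)" by measurable
      show "AE s in Iv x0 x. h s = fr s - a l s * u s" using AE_sub[OF aeh, of x0 x] x by auto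
    qed
    moreover have "u x = u x0 + integral\<^sup>L (Iv x0 x) h" using ueq x by blast
    ultimately show "u x = u x0 + integral\<^sup>L (Iv x0 x) (\<lambda>s. fr s - a l s * u s)" by (simp only:)
  qed
  have ae\<phi>: "AE x in Iv x0 x1. \<phi> x = u x / complex_of_real (g x)"
  proof (rule lebesgue_on_mono[OF aeu])
    fix x assume ux: "u x = complex_of_real (g x) * \<phi> x" and x: "x \<in> {x0..x1}"
    then show "\<phi> x = u x / complex_of_real (g x)" using gnz[OF x] by (simp add: field_simps)
  qed
  have u0': "u x0 = integral\<^sup>L (Iv x0 x1) (\<lambda>x. complex_of_real (q x / g x) * u x)"
    unfolding u0
  proof (rule integral_cong_AE)
    have [measurable]: "q \<in> borel_measurable (Iv x0 x1)" "\<phi> \<in> borel_measurable (Iv x0 x1)"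
      "g \<in> borel_measurable (Iv x0 x1)" "u \<in> borel_measurable (Iv x0 x1)"
      using qm \<phi>i cont_meas[OF gc] cont_meas[OF uc] by auto
    show "(\<lambda>x. complex_of_real (q x) * \<phi> x) \<in> borel_measurable (Iv x0 x1)" by measurable
    show "(\<lambda>x. complex_of_real (q x / g x) * u x) \<in> borel_measurable (Iv x0 x1)" by measurable
    show "AE x in Iv x0 x1. complex_of_real (q x) * \<phi> x = complex_of_real (q x / g x) * u x"
    proof (rule lebesgue_on_mono[OF aeu])
      fix x assume ux: "u x = complex_of_real (g x) * \<phi> x" and x: "x \<in> {x0..x1}"
      then show "complex_of_real (q x) * \<phi> x = complex_of_real (q x / g x) * u x"
        using gnz[OF x] by (simp add: field_simps)
    qed
  qed
  show ?thesis by (rule that[OF fri ae1 uc ueq' ae\<phi> u0' \<phi>i])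
qed

lemma a_eq: "a l = (\<lambda>s. (l + complex_of_real (w s)) / complex_of_real (g s))"
  by (rule ext) (simp add: a_def)

lemma xi_eq: "xi x0 x1 g w q l = integral\<^sup>L (Iv x0 x1) (\<lambda>x. complex_of_real (q x / g x) * E l x) - 1"
  by (simp add: xi_def E_def A_def a_eq)

lemma Qint: "integrable (Iv x0 x1) (\<lambda>x. complex_of_real (q x / g x) * E l x)"
  by (rule qg_int[OF Econt])

lemma not_AE_False: "\<not> (AE x in Iv x0 x1. False)"
proof
  assume "AE x in Iv x0 x1. False"
  then have "ae_filter (Iv x0 x1) = bot" by (simp add: eventually_False)
  then have "emeasure (Iv x0 x1) (space (Iv x0 x1)) = 0" by (simp add: ae_filter_eq_bot_iff)
  moreover have "emeasure (Iv x0 x1) (space (Iv x0 x1)) = ennreal (x1 - x0)"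
    using lt by (simp add: emeasure_restrict_space)
  ultimately show False using lt by simp
qed

lemma pt_imp_xi:
  assumes "l \<in> point_spectrum x0 x1 g w q"
  shows "xi x0 x1 g w q l = 0"
proof (rule ccontr)
  assume xnz: "xi x0 x1 g w q l \<noteq> 0"
  from assms obtain \<phi> where G: "L_graph x0 x1 g w q \<phi> (\<lambda>x. l * \<phi> x)" and nz: "\<not> (AE x in Iv x0 x1. \<phi> x = 0)"
    unfolding point_spectrum_def by blast
  obtain u fr where fri: "integrable (Iv x0 x1) fr" and ae1: "AE x in Iv x0 x1. l * \<phi> x - l * \<phi> x = fr x"
    and uc: "continuous_on {x0..x1} u"
    and ueq: "\<forall>x\<in>{x0..x1}. u x = u x0 + integral\<^sup>L (Iv x0 x) (\<lambda>s. fr s - a l s * u s)"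
    and ae\<phi>: "AE x in Iv x0 x1. \<phi> x = u x / complex_of_real (g x)"
    and u0: "u x0 = integral\<^sup>L (Iv x0 x1) (\<lambda>x. complex_of_real (q x / g x) * u x)"
    by (rule graph_sol[OF G, of l]) blast
  have ux: "u x = E l x * u x0" if x: "x \<in> {x0..x1}" for x
  proof -
    have "K l fr x = 0" unfolding K_def
    proof (rule integral_eq_zero_AE)
      show "AE s in Iv x0 x. fr s * exp (A l s) = 0"
        using AE_sub[OF ae1, of x0 x] x by (auto elim!: eventually_mono)
    qed
    then show ?thesis using sol_form[OF fri uc ueq x] by simp
  qed
  have "u x0 = integral\<^sup>L (Iv x0 x1) (\<lambda>x. complex_of_real (q x / g x) * u x)" by (rule u0)
  also have "\<dots> = integral\<^sup>L (Iv x0 x1) (\<lambda>x. complex_of_real (q x / g x) * E l x * u x0)"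
  proof (rule Bochner_Integration.integral_cong[OF refl])
    fix x assume "x \<in> space (Iv x0 x1)"
    then have "x \<in> {x0..x1}" by simp
    then have e: "u x = E l x * u x0" by (rule ux)
    show "complex_of_real (q x / g x) * u x = complex_of_real (q x / g x) * E l x * u x0"
      by (simp only: e mult.assoc)
  qed
  also have "\<dots> = (xi x0 x1 g w q l + 1) * u x0" by (subst integral_mult_left_zero) (simp add: xi_eq)
  finally have "u x0 * xi x0 x1 g w q l = 0" by (simp add: algebra_simps)
  then have "u x0 = 0" using xnz by simp
  have "AE x in Iv x0 x1. \<phi> x = 0"
  proof (rule lebesgue_on_mono[OF ae\<phi>])
    fix x assume "\<phi> x = u x / complex_of_real (g x)" "x \<in> {x0..x1}"
    moreover have "u x = E l x * u x0" using ux \<open>x \<in> {x0..x1}\<close> by blast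
    ultimately show "\<phi> x = 0" using \<open>u x0 = 0\<close> by simp
  qed
  then show False using nz by simp
qed


lemma xi_imp_pt:
  assumes xz: "xi x0 x1 g w q l = 0"
  shows "l \<in> point_spectrum x0 x1 g w q"
proof -
  define \<phi> where "\<phi> = (\<lambda>x. E l x / complex_of_real (g x))"
  define h where "h = (\<lambda>x. - (a l x * E l x))"
  have \<phi>c: "continuous_on {x0..x1} \<phi>" unfolding \<phi>_def using Econt gcc gnz by (intro continuous_intros) auto
  have hc: "continuous_on {x0..x1} h" unfolding h_def using Econt acont by (intro continuous_intros)
  have Eeq: "\<forall>x\<in>{x0..x1}. E l x = E l x0 + integral\<^sup>L (Iv x0 x) h"
  proof
    fix x assume x: "x \<in> {x0..x1}"
    have z: "integrable (Iv x0 x1) (\<lambda>_. 0::complex)" by simp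
    show "E l x = E l x0 + integral\<^sup>L (Iv x0 x) h"
      using exist_sol[OF acont[of l] z x, where c=1] by (simp add: h_def E_def A_def)
  qed
  have f1: "integrable (Iv x0 x1) \<phi>" by (rule continuous_imp_integrable_real[OF \<phi>c])
  have f2: "integrable (Iv x0 x1) h" by (rule continuous_imp_integrable_real[OF hc])
  have f4: "AE x in Iv x0 x1. E l x = complex_of_real (g x) * \<phi> x"
  proof (rule AE_I2)
    fix x assume "x \<in> space (Iv x0 x1)"
    then have x: "x \<in> {x0..x1}" by simp
    show "E l x = complex_of_real (g x) * \<phi> x" using gnz[OF x] by (simp add: \<phi>_def)
  qed
  have "integral\<^sup>L (Iv x0 x1) (\<lambda>x. complex_of_real (q x) * \<phi> x)
      = integral\<^sup>L (Iv x0 x1) (\<lambda>x. complex_of_real (q x / g x) * E l x)"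
    by (rule Bochner_Integration.integral_cong) (auto simp: \<phi>_def)
  also have "\<dots> = 1" using xz by (simp add: xi_eq)
  finally have f5: "E l x0 = integral\<^sup>L (Iv x0 x1) (\<lambda>x. complex_of_real (q x) * \<phi> x)" by (simp add: E0)
  have f6: "AE x in Iv x0 x1. l * \<phi> x = - h x - complex_of_real (w x) * \<phi> x"
  proof (rule AE_I2)
    fix x assume "x \<in> space (Iv x0 x1)"
    then have x: "x \<in> {x0..x1}" by simp
    show "l * \<phi> x = - h x - complex_of_real (w x) * \<phi> x"
      using gnz[OF x] by (simp add: \<phi>_def h_def a_def field_simps)
  qed
  have "L_graph x0 x1 g w q \<phi> (\<lambda>x. l * \<phi> x)"
    unfolding L_graph_def using f1 f2 Eeq f4 f5 f6 by blast
  moreover have "\<not> (AE x in Iv x0 x1. \<phi> x = 0)"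
  proof
    assume "AE x in Iv x0 x1. \<phi> x = 0"
    then have "AE x in Iv x0 x1. False"
      by (rule lebesgue_on_mono) (use gnz in \<open>auto simp: \<phi>_def E_def\<close>)
    then show False using not_AE_False by simp
  qed
  ultimately show ?thesis unfolding point_spectrum_def by blast
qed

lemma resolvent_exist:
  assumes xnz: "xi x0 x1 g w q l \<noteq> 0" and f: "integrable (Iv x0 x1) f"
  shows "\<exists>\<phi> \<psi>. L_graph x0 x1 g w q \<phi> \<psi> \<and> (AE x in Iv x0 x1. l * \<phi> x - \<psi> x = f x)"
proof -
  define Kf where "Kf = K l f"
  have Kfc: "continuous_on {x0..x1} Kf" unfolding Kf_def by (rule Kcont[OF f])
  have EKc: "continuous_on {x0..x1} (\<lambda>x. E l x * Kf x)" using Econt Kfc by (intro continuous_intros)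
  define J where "J = integral\<^sup>L (Iv x0 x1) (\<lambda>x. complex_of_real (q x / g x) * (E l x * Kf x))"
  define c where "c = - J / xi x0 x1 g w q l"
  define U where "U = (\<lambda>x. E l x * (c + Kf x))"
  have Uc: "continuous_on {x0..x1} U" unfolding U_def using Econt Kfc by (intro continuous_intros)
  define \<phi> where "\<phi> = (\<lambda>x. U x / complex_of_real (g x))"
  define h where "h = (\<lambda>x. f x - a l x * U x)"
  define \<psi> where "\<psi> = (\<lambda>x. - h x - complex_of_real (w x) * \<phi> x)"
  have \<phi>c: "continuous_on {x0..x1} \<phi>" unfolding \<phi>_def using Uc gcc gnz by (intro continuous_intros) auto
  have f1: "integrable (Iv x0 x1) \<phi>" by (rule continuous_imp_integrable_real[OF \<phi>c])
  have aUi: "integrable (Iv x0 x1) (\<lambda>x. a l x * U x)"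
    by (rule continuous_imp_integrable_real[OF continuous_on_mult[OF acont[of l] Uc]])
  have f2: "integrable (Iv x0 x1) h" unfolding h_def using f aUi by simp
  have f3: "\<forall>x\<in>{x0..x1}. U x = U x0 + integral\<^sup>L (Iv x0 x) h"
  proof
    fix x assume x: "x \<in> {x0..x1}"
    show "U x = U x0 + integral\<^sup>L (Iv x0 x) h"
      using exist_sol[OF acont[of l] f x, where c=c] by (simp add: U_def h_def E_def A_def Kf_def K_def)
  qed
  have f4: "AE x in Iv x0 x1. U x = complex_of_real (g x) * \<phi> x"
  proof (rule AE_I2)
    fix x assume "x \<in> space (Iv x0 x1)"
    then have x: "x \<in> {x0..x1}" by simp
    show "U x = complex_of_real (g x) * \<phi> x" using gnz[OF x] by (simp add: \<phi>_def)
  qed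
  have U0: "U x0 = c" by (simp add: U_def E0 Kf_def K0)
  have "integral\<^sup>L (Iv x0 x1) (\<lambda>x. complex_of_real (q x) * \<phi> x)
      = integral\<^sup>L (Iv x0 x1) (\<lambda>x. complex_of_real (q x / g x) * E l x * c + complex_of_real (q x / g x) * (E l x * Kf x))"
    by (rule Bochner_Integration.integral_cong) (auto simp: \<phi>_def U_def algebra_simps add_divide_distrib)
  also have "\<dots> = integral\<^sup>L (Iv x0 x1) (\<lambda>x. complex_of_real (q x / g x) * E l x * c) + J"
    unfolding J_def
    by (rule Bochner_Integration.integral_add[OF Bochner_Integration.integrable_mult_left[OF Qint[of l]] qg_int[OF EKc]])
  also have "\<dots> = (xi x0 x1 g w q l + 1) * c + J"
    by (subst integral_mult_left_zero) (simp add: xi_eq)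
  also have "\<dots> = c" using xnz by (simp add: c_def field_simps)
  finally have f5: "U x0 = integral\<^sup>L (Iv x0 x1) (\<lambda>x. complex_of_real (q x) * \<phi> x)" by (simp add: U0)
  have f6: "AE x in Iv x0 x1. \<psi> x = - h x - complex_of_real (w x) * \<phi> x"
    by (simp add: \<psi>_def)
  have G: "L_graph x0 x1 g w q \<phi> \<psi>"
    unfolding L_graph_def using f1 f2 f3 f4 f5 f6 by blast
  have "AE x in Iv x0 x1. l * \<phi> x - \<psi> x = f x"
  proof (rule AE_I2)
    fix x assume "x \<in> space (Iv x0 x1)"
    then have x: "x \<in> {x0..x1}" by simp
    show "l * \<phi> x - \<psi> x = f x" using gnz[OF x] by (simp add: \<psi>_def \<phi>_def h_def a_def field_simps)
  qed
  then show ?thesis using G by blast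
qed

lemma resolvent_inj:
  assumes xnz: "xi x0 x1 g w q l \<noteq> 0"
    and G: "L_graph x0 x1 g w q \<phi> \<psi>" and ae: "AE x in Iv x0 x1. l * \<phi> x - \<psi> x = 0"
  shows "AE x in Iv x0 x1. \<phi> x = 0"
proof (rule ccontr)
  assume nz: "\<not> (AE x in Iv x0 x1. \<phi> x = 0)"
  have "L_graph x0 x1 g w q \<phi> (\<lambda>x. l * \<phi> x)"
  proof -
    from G obtain u h where \<phi>i: "integrable (Iv x0 x1) \<phi>" and hi: "integrable (Iv x0 x1) h"
      and ueq: "\<forall>x\<in>{x0..x1}. u x = u x0 + integral\<^sup>L (Iv x0 x) h"
      and aeu: "AE x in Iv x0 x1. u x = complex_of_real (g x) * \<phi> x"
      and u0: "u x0 = integral\<^sup>L (Iv x0 x1) (\<lambda>x. complex_of_real (q x) * \<phi> x)"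
      and ae\<psi>: "AE x in Iv x0 x1. \<psi> x = - h x - complex_of_real (w x) * \<phi> x"
      unfolding L_graph_def by blast
    have "AE x in Iv x0 x1. l * \<phi> x = - h x - complex_of_real (w x) * \<phi> x"
      using ae ae\<psi> by eventually_elim simp
    then show ?thesis unfolding L_graph_def using \<phi>i hi ueq aeu u0 by blast
  qed
  then have "l \<in> point_spectrum x0 x1 g w q" using nz unfolding point_spectrum_def by blast
  then show False using pt_imp_xi xnz by blast
qed

lemma resolvent_bound:
  assumes xnz: "xi x0 x1 g w q l \<noteq> 0"
  shows "\<exists>C. \<forall>\<phi> \<psi>. L_graph x0 x1 g w q \<phi> \<psi> \<longrightarrow>
                 L1norm x0 x1 \<phi> \<le> C * L1norm x0 x1 (\<lambda>x. l * \<phi> x - \<psi> x)"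
proof -
  have x0I: "x0 \<in> {x0..x1}" using lt by auto
  have eAc: "continuous_on {x0..x1} (\<lambda>s. exp (A l s))" using Acont by (intro continuous_intros)
  obtain MX where MX: "\<forall>x\<in>{x0..x1}. norm (exp (A l x)) \<le> MX" using cont_bound[OF eAc] by blast
  obtain ME where ME: "\<forall>x\<in>{x0..x1}. norm (E l x) \<le> ME" using cont_bound[OF Econt] by blast
  have igc: "continuous_on {x0..x1} (\<lambda>x. 1 / complex_of_real (g x))" using gcc gnz by (intro continuous_intros) auto
  obtain Mg where Mg: "\<forall>x\<in>{x0..x1}. norm (1 / complex_of_real (g x)) \<le> Mg" using cont_bound[OF igc] by blast
  have MX0: "0 \<le> MX" using MX x0I by (meson norm_ge_zero order.trans)
  have ME0: "0 \<le> ME" using ME x0I by (meson norm_ge_zero order.trans)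
  have Mg0: "0 \<le> Mg" using Mg x0I by (meson norm_ge_zero order.trans)
  define Q where "Q = integral\<^sup>L (Iv x0 x1) (\<lambda>x. norm (complex_of_real (q x / g x) * E l x))"
  have Q0: "0 \<le> Q" unfolding Q_def by simp
  define m where "m = measure (Iv x0 x1) (space (Iv x0 x1))"
  have m0: "0 \<le> m" unfolding m_def by simp
  define X where "X = norm (xi x0 x1 g w q l)"
  have X0: "0 < X" using xnz by (simp add: X_def)
  define C2 where "C2 = Mg * ME * (Q * MX / X + MX)"
  have C20: "0 \<le> C2" unfolding C2_def using Mg0 ME0 Q0 MX0 X0 by simp
  have fin: "finite_measure (Iv x0 x1)" by (rule finite_measure_lebesgue_on) auto
  show ?thesis
  proof (intro exI[of _ "m * C2"] allI impI)
    fix \<phi> \<psi> assume G: "L_graph x0 x1 g w q \<phi> \<psi>"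
    obtain u fr where fri: "integrable (Iv x0 x1) fr" and ae1: "AE x in Iv x0 x1. l * \<phi> x - \<psi> x = fr x"
      and uc: "continuous_on {x0..x1} u"
      and ueq: "\<forall>x\<in>{x0..x1}. u x = u x0 + integral\<^sup>L (Iv x0 x) (\<lambda>s. fr s - a l s * u s)"
      and ae\<phi>: "AE x in Iv x0 x1. \<phi> x = u x / complex_of_real (g x)"
      and u0: "u x0 = integral\<^sup>L (Iv x0 x1) (\<lambda>x. complex_of_real (q x / g x) * u x)"
      and \<phi>i: "integrable (Iv x0 x1) \<phi>"
      by (rule graph_sol[OF G, of l]) blast
    define N where "N = integral\<^sup>L (Iv x0 x1) (\<lambda>x. norm (fr x))"
    have N0: "0 \<le> N" unfolding N_def by simp
    have L1f: "L1norm x0 x1 (\<lambda>x. l * \<phi> x - \<psi> x) = N"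
      unfolding L1norm_def N_def
    proof (rule integral_cong_AE)
      have frm: "fr \<in> borel_measurable (Iv x0 x1)" using fri by auto
      have [measurable]: "(\<lambda>x. l * \<phi> x - \<psi> x) \<in> borel_measurable (Iv x0 x1)"
        by (rule ae_meas[OF frm ae1])
      show "(\<lambda>x. cmod (l * \<phi> x - \<psi> x)) \<in> borel_measurable (Iv x0 x1)" by measurable
      show "(\<lambda>x. norm (fr x)) \<in> borel_measurable (Iv x0 x1)" using frm by measurable
      show "AE x in Iv x0 x1. cmod (l * \<phi> x - \<psi> x) = norm (fr x)"
        using ae1 by (rule eventually_mono) simp
    qed
    have ux: "u x = E l x * (u x0 + K l fr x)" if "x \<in> {x0..x1}" for x
      by (rule sol_form[OF fri uc ueq that])
    have Kb: "norm (K l fr x) \<le> MX * N" if x: "x \<in> {x0..x1}" for x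
    proof -
      have "norm (K l fr x) \<le> integral\<^sup>L (Iv x0 x) (\<lambda>s. norm (fr s * exp (A l s)))"
        unfolding K_def by (rule integral_norm_bound)
      also have "\<dots> \<le> integral\<^sup>L (Iv x0 x1) (\<lambda>s. norm (fr s) * MX)"
      proof (rule integral_mono_lebesgue_on_AE)
        show "integrable (Iv x0 x1) (\<lambda>s. norm (fr s) * MX)" using fri by simp
        show "AE s in Iv x0 x. norm (fr s * exp (A l s)) \<le> norm (fr s) * MX"
        proof (rule AE_I2)
          fix s assume "s \<in> space (Iv x0 x)"
          then have "s \<in> {x0..x1}" using x by auto
          then have "norm (exp (A l s)) \<le> MX" using MX by blast
          then show "norm (fr s * exp (A l s)) \<le> norm (fr s) * MX"
            by (simp add: norm_mult mult_left_mono)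
        qed
        show "AE s in Iv x0 x1. 0 \<le> norm (fr s) * MX" using MX0 by simp
      qed (use x in auto)
      also have "\<dots> = MX * N" by (simp add: N_def mult.commute)
      finally show ?thesis .
    qed
    define J where "J = integral\<^sup>L (Iv x0 x1) (\<lambda>x. complex_of_real (q x / g x) * (E l x * K l fr x))"
    have EKc: "continuous_on {x0..x1} (\<lambda>x. E l x * K l fr x)" using Econt Kcont[OF fri] by (intro continuous_intros)
    have "u x0 = integral\<^sup>L (Iv x0 x1) (\<lambda>x. complex_of_real (q x / g x) * u x)" by (rule u0)
    also have "\<dots> = integral\<^sup>L (Iv x0 x1) (\<lambda>x. complex_of_real (q x / g x) * E l x * u x0 + complex_of_real (q x / g x) * (E l x * K l fr x))"
    proof (rule Bochner_Integration.integral_cong[OF refl])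
      fix x assume "x \<in> space (Iv x0 x1)"
      then have "x \<in> {x0..x1}" by simp
      then have e: "u x = E l x * (u x0 + K l fr x)" by (rule ux)
      show "complex_of_real (q x / g x) * u x = complex_of_real (q x / g x) * E l x * u x0 + complex_of_real (q x / g x) * (E l x * K l fr x)"
        by (simp only: e algebra_simps)
    qed
    also have "\<dots> = integral\<^sup>L (Iv x0 x1) (\<lambda>x. complex_of_real (q x / g x) * E l x * u x0) + J"
      unfolding J_def
      by (rule Bochner_Integration.integral_add[OF Bochner_Integration.integrable_mult_left[OF Qint[of l]] qg_int[OF EKc]])
    also have "\<dots> = (xi x0 x1 g w q l + 1) * u x0 + J"
      by (subst integral_mult_left_zero) (simp add: xi_eq)
    finally have "J + u x0 * xi x0 x1 g w q l = 0" by (simp add: algebra_simps)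
    then have uJ: "u x0 * xi x0 x1 g w q l = - J" by (simp add: eq_neg_iff_add_eq_0 add.commute)
    have Jb: "norm J \<le> Q * (MX * N)"
    proof -
      have "norm J \<le> integral\<^sup>L (Iv x0 x1) (\<lambda>x. norm (complex_of_real (q x / g x) * (E l x * K l fr x)))"
        unfolding J_def by (rule integral_norm_bound)
      also have "\<dots> \<le> integral\<^sup>L (Iv x0 x1) (\<lambda>x. norm (complex_of_real (q x / g x) * E l x) * (MX * N))"
      proof (rule integral_mono)
        show "integrable (Iv x0 x1) (\<lambda>x. norm (complex_of_real (q x / g x) * (E l x * K l fr x)))"
          using qg_int[OF EKc] by simp
        show "integrable (Iv x0 x1) (\<lambda>x. norm (complex_of_real (q x / g x) * E l x) * (MX * N))"
          using Qint[of l] by simp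
        fix x assume "x \<in> space (Iv x0 x1)"
        then have "x \<in> {x0..x1}" by simp
        then have kb: "norm (K l fr x) \<le> MX * N" by (rule Kb)
        have "norm (complex_of_real (q x / g x) * (E l x * K l fr x)) = norm (complex_of_real (q x / g x) * E l x) * norm (K l fr x)"
          by (simp only: norm_mult mult.assoc)
        also have "\<dots> \<le> norm (complex_of_real (q x / g x) * E l x) * (MX * N)"
          by (rule mult_left_mono[OF kb norm_ge_zero])
        finally show "norm (complex_of_real (q x / g x) * (E l x * K l fr x)) \<le> norm (complex_of_real (q x / g x) * E l x) * (MX * N)" .
      qed
      also have "\<dots> = Q * (MX * N)" by (simp add: Q_def)
      finally show ?thesis .
    qed
    have u0b: "norm (u x0) \<le> Q * MX * N / X"
    proof -
      have "norm (u x0) * X = norm J" using uJ by (simp add: X_def norm_mult[symmetric])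
      then have "norm (u x0) = norm J / X" using X0 by (simp add: field_simps)
      then show ?thesis using Jb X0 by (simp add: divide_right_mono mult.assoc)
    qed
    have \<phi>b: "AE x in Iv x0 x1. cmod (\<phi> x) \<le> C2 * N"
    proof (rule lebesgue_on_mono[OF ae\<phi>])
      fix x assume e\<phi>: "\<phi> x = u x / complex_of_real (g x)" and x: "x \<in> {x0..x1}"
      have e: "u x = E l x * (u x0 + K l fr x)" by (rule ux[OF x])
      have b1: "norm (u x0 + K l fr x) \<le> Q * MX * N / X + MX * N"
        using norm_triangle_ineq[of "u x0" "K l fr x"] u0b Kb[OF x] by linarith
      have b2: "norm (u x) \<le> ME * (Q * MX * N / X + MX * N)"
        unfolding e norm_mult using ME x b1 ME0 by (intro mult_mono) auto
      have "cmod (\<phi> x) = norm (u x) * norm (1 / complex_of_real (g x))"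
        unfolding e\<phi> by (simp add: norm_divide)
      also have "\<dots> \<le> (ME * (Q * MX * N / X + MX * N)) * Mg"
        using b2 Mg x ME0 Q0 MX0 N0 X0 by (intro mult_mono) auto
      also have "\<dots> = C2 * N" by (simp add: C2_def field_simps)
      finally show "cmod (\<phi> x) \<le> C2 * N" .
    qed
    have "L1norm x0 x1 \<phi> \<le> integral\<^sup>L (Iv x0 x1) (\<lambda>x. C2 * N)"
      unfolding L1norm_def
    proof (rule integral_mono_AE)
      show "integrable (Iv x0 x1) (\<lambda>x. cmod (\<phi> x))" using \<phi>i by simp
      show "integrable (Iv x0 x1) (\<lambda>x. C2 * N)" using fin by (simp add: finite_measure.integrable_const)
    qed (rule \<phi>b)
    also have "\<dots> = m * C2 * N" by (simp add: m_def)
    finally show "L1norm x0 x1 \<phi> \<le> m * C2 * L1norm x0 x1 (\<lambda>x. l * \<phi> x - \<psi> x)" by (simp add: L1f)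
  qed
qed

end


theorem proposition7:
  fixes x0 x1 :: real and g w q :: "real \<Rightarrow> real"
  assumes "0 < x0" and "x0 < x1"
    and "\<exists>g'. (\<forall>x\<in>{x0..x1}. (g has_real_derivative g' x) (at x within {x0..x1}))
              \<and> continuous_on {x0..x1} g'"
    and "\<forall>x\<in>{x0..x1}. g x > 0"
    and "continuous_on {x0..x1} w"
    and "AE x in lebesgue_on {x0..x1}. w x \<ge> 0"
    and "q \<in> borel_measurable (lebesgue_on {x0..x1})"
    and "\<exists>B. AE x in lebesgue_on {x0..x1}. \<bar>q x\<bar> \<le> B"
    and "AE x in lebesgue_on {x0..x1}. q x \<ge> 0"
  shows "spectrum_L x0 x1 g w q = point_spectrum x0 x1 g w q \<and>
         (\<forall>l::complex. l \<in> point_spectrum x0 x1 g w q \<longleftrightarrow> xi x0 x1 g w q l = 0)"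
proof -
  obtain g' where g': "\<forall>x\<in>{x0..x1}. (g has_real_derivative g' x) (at x within {x0..x1})"
    using assms(3) by blast
  have gc: "continuous_on {x0..x1} g"
    unfolding continuous_on_eq_continuous_within using g' DERIV_continuous by blast
  obtain B where B: "AE x in lebesgue_on {x0..x1}. \<bar>q x\<bar> \<le> B" using assms(8) by blast
  have qm[measurable]: "q \<in> borel_measurable (Iv x0 x1)" by (rule assms(7))
  have fin: "finite_measure (Iv x0 x1)" by (rule finite_measure_lebesgue_on) auto
  have qi: "integrable (Iv x0 x1) (\<lambda>x. complex_of_real (q x))"
  proof (rule Bochner_Integration.integrable_bound)
    show "integrable (Iv x0 x1) (\<lambda>x. B)" using fin by (simp add: finite_measure.integrable_const)
    show "(\<lambda>x. complex_of_real (q x)) \<in> borel_measurable (Iv x0 x1)" by measurable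
    show "AE x in Iv x0 x1. norm (complex_of_real (q x)) \<le> norm B"
      using B by (rule eventually_mono) auto
  qed
  interpret S x0 x1 g w q
    using assms(2,4,5) gc qm qi by unfold_locales auto
  have char: "\<forall>l. l \<in> point_spectrum x0 x1 g w q \<longleftrightarrow> xi x0 x1 g w q l = 0"
    using pt_imp_xi xi_imp_pt by blast
  have res: "l \<in> resolvent_set x0 x1 g w q \<longleftrightarrow> l \<notin> point_spectrum x0 x1 g w q" for l
  proof
    assume r: "l \<in> resolvent_set x0 x1 g w q"
    show "l \<notin> point_spectrum x0 x1 g w q"
    proof
      assume "l \<in> point_spectrum x0 x1 g w q"
      then obtain \<phi> where G: "L_graph x0 x1 g w q \<phi> (\<lambda>x. l * \<phi> x)" and nz: "\<not> (AE x in Iv x0 x1. \<phi> x = 0)"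
        unfolding point_spectrum_def by blast
      from r have "\<forall>\<phi> \<psi>. L_graph x0 x1 g w q \<phi> \<psi> \<and> (AE x in Iv x0 x1. l * \<phi> x - \<psi> x = 0)
                 \<longrightarrow> (AE x in Iv x0 x1. \<phi> x = 0)"
        unfolding resolvent_set_def by blast
      then have "AE x in Iv x0 x1. \<phi> x = 0" using G by auto
      then show False using nz by simp
    qed
  next
    assume "l \<notin> point_spectrum x0 x1 g w q"
    then have xnz: "xi x0 x1 g w q l \<noteq> 0" using char by blast
    show "l \<in> resolvent_set x0 x1 g w q"
      unfolding resolvent_set_def
      using resolvent_exist[OF xnz] resolvent_inj[OF xnz] resolvent_bound[OF xnz] by blast
  qed
  have "spectrum_L x0 x1 g w q = point_spectrum x0 x1 g w q"
    unfolding spectrum_L_def using res by blast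
  then show ?thesis using char by blast
qed

end
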